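(* Let $p$ be prime, $G=\mathbb{Z}_{p^2}\times\mathbb{Z}_p$, and $A\subset G$ with $\#A=p$ and $\mathcal{Z}_A\neq\emptyset$. Then $A$ is a tile of $G$ and also a spectral set.
   Context: For $b=(b_1,b_2)\in G$ let $\chi_b(a_1,a_2)=e^{2\pi i(a_1b_1/p^2+a_2b_2/p)}$, $\widehat{1}_A(b)=\sum_{a\in A}\overline{\chi_b(a)}$, and $\mathcal{Z}_A=\{b\in G:\widehat{1}_A(b)=0\}$. $A$ is a spectral set if there is $B\subset G$ with $\{\chi_b|_A:b\in B\}$ an orthogonal basis of $L^2(A)$ (counting measure). $A$ is a tile if there is $T\subset G$ with $A\oplus T=G$ (every element of $G$ uniquely $a+t$, $a\in A,t\in T$). *)

theory Defs
  imports "HOL-Analysis.Analysis"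
begin

definition Gset :: "nat \<Rightarrow> (nat \<times> nat) set" where
  "Gset p = {0..<p^2} \<times> {0..<p}"

definition addG :: "nat \<Rightarrow> nat \<times> nat \<Rightarrow> nat \<times> nat \<Rightarrow> nat \<times> nat" where
  "addG p x y = ((fst x + fst y) mod p^2, (snd x + snd y) mod p)"

definition chi :: "nat \<Rightarrow> nat \<times> nat \<Rightarrow> nat \<times> nat \<Rightarrow> complex" where
  "chi p b a = exp (2 * of_real pi * \<i> *
      of_real (real (fst a) * real (fst b) / real (p^2) + real (snd a) * real (snd b) / real p))"

definition hat1 :: "nat \<Rightarrow> (nat \<times> nat) set \<Rightarrow> nat \<times> nat \<Rightarrow> complex" where
  "hat1 p A b = (\<Sum>a\<in>A. cnj (chi p b a))"

definition zeroset :: "nat \<Rightarrow> (nat \<times> nat) set \<Rightarrow> (nat \<times> nat) set" where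
  "zeroset p A = {b \<in> Gset p. hat1 p A b = 0}"

text \<open>A is spectral: some B \<subseteq> G such that the restricted characters chi_b|_A, b \<in> B,
  form an orthogonal basis of L^2(A) (counting measure): pairwise orthogonal and spanning.\<close>
definition spectral :: "nat \<Rightarrow> (nat \<times> nat) set \<Rightarrow> bool" where
  "spectral p A \<longleftrightarrow> (\<exists>B \<subseteq> Gset p.
     (\<forall>b\<in>B. \<forall>b'\<in>B. b \<noteq> b' \<longrightarrow> (\<Sum>a\<in>A. chi p b a * cnj (chi p b' a)) = 0) \<and>
     (\<forall>f :: nat \<times> nat \<Rightarrow> complex. \<exists>c :: nat \<times> nat \<Rightarrow> complex.
        \<forall>a\<in>A. f a = (\<Sum>b\<in>B. c b * chi p b a)))"

definition tile :: "nat \<Rightarrow> (nat \<times> nat) set \<Rightarrow> bool" where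
  "tile p A \<longleftrightarrow> (\<exists>T \<subseteq> Gset p. \<forall>g\<in>Gset p.
     \<exists>!x. x \<in> A \<times> T \<and> addG p (fst x) (snd x) = g)"

end

theory Submission
  imports Defs "HOL-Computational_Algebra.Polynomial_Factorial"
begin


definition Dv :: "nat \<Rightarrow> int poly \<Rightarrow> bool" where
  "Dv p h \<longleftrightarrow> (\<forall>k. int p dvd coeff h k)"

lemma Dv_0[simp]: "Dv p 0" by (simp add: Dv_def)

lemma Dv_add: "Dv p f \<Longrightarrow> Dv p g \<Longrightarrow> Dv p (f + g)"
  by (simp add: Dv_def)

lemma Dv_diff: "Dv p f \<Longrightarrow> Dv p g \<Longrightarrow> Dv p (f - g)"
  by (simp add: Dv_def)

lemma Dv_mult_left: "Dv p h \<Longrightarrow> Dv p (f * h)"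
  unfolding Dv_def coeff_mult by (auto intro!: dvd_sum)

lemma Dv_mult_right: "Dv p h \<Longrightarrow> Dv p (h * f)"
  using Dv_mult_left[of p h f] by (simp add: mult.commute)

lemma Dv_sum: "(\<And>i. i \<in> S \<Longrightarrow> Dv p (f i)) \<Longrightarrow> Dv p (\<Sum>i\<in>S. f i)"
  by (induction S rule: infinite_finite_induct) (auto intro: Dv_add)

lemma Dv_smult: "int p dvd c \<Longrightarrow> Dv p (smult c h)"
  by (simp add: Dv_def)

lemma Dv_power_diff: "Dv p (f - g) \<Longrightarrow> Dv p (f ^ n - g ^ n)"
  by (simp add: power_diff_sumr2 Dv_mult_right)

lemma Dv_sum_diff: "(\<And>i. i \<in> S \<Longrightarrow> Dv p (f i - g i)) \<Longrightarrow> Dv p ((\<Sum>i\<in>S. f i) - (\<Sum>i\<in>S. g i))"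
  using Dv_sum[of S p "\<lambda>i. f i - g i"] by (simp add: sum_subtractf)

lemma frob:
  fixes Y :: "int poly"
  assumes "prime p"
  shows "Dv p ((Y + 1) ^ p - (Y ^ p + 1))"
proof -
  have p0: "p > 1" using assms prime_gt_1_nat by blast
  have "(Y + 1) ^ p = (\<Sum>k\<le>p. of_nat (p choose k) * Y ^ k)"
    by (simp add: binomial_ring)
  also have "{..p} = insert 0 (insert p {1..<p})" using p0 by auto
  also have "(\<Sum>k\<in>insert 0 (insert p {1..<p}). of_nat (p choose k) * Y ^ k)
      = 1 + (Y ^ p + (\<Sum>k\<in>{1..<p}. of_nat (p choose k) * Y ^ k))"
    using p0 by (subst sum.insert; auto)+
  finally have e: "(Y + 1) ^ p - (Y ^ p + 1) = (\<Sum>k\<in>{1..<p}. of_nat (p choose k) * Y ^ k)"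
    by simp
  show ?thesis unfolding e
  proof (rule Dv_sum)
    fix k assume k: "k \<in> {1..<p}"
    have "p dvd p choose k" using k assms by (intro dvd_choose_prime) auto
    hence "int p dvd int (p choose k)" by simp
    moreover have "(of_nat (p choose k) :: int poly) = [:int (p choose k):]"
      by (simp add: of_nat_poly)
    ultimately show "Dv p (of_nat (p choose k) * Y ^ k)"
      by (simp add: Dv_smult)
  qed
qed

lemma eis_aux:
  fixes F A B :: "int poly"
  assumes p: "prime p" and FAB: "F = A * B" and dF: "degree F = N" and lF: "lead_coeff F = 1"
    and low: "\<forall>k<N. int p dvd coeff F k"
    and A0: "int p dvd coeff A 0" and B0: "\<not> int p dvd coeff B 0"
  shows "degree B = 0"
proof -
  have pi: "prime (int p)" using p by (simp add: prime_nat_int_transfer)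
  have F0: "F \<noteq> 0" using lF by auto
  hence A0': "A \<noteq> 0" and B0': "B \<noteq> 0" using FAB by auto
  have "lead_coeff A * lead_coeff B = 1" using lF FAB by (simp add: lead_coeff_mult)
  hence "\<not> int p dvd lead_coeff A"
  proof (intro notI)
    assume "lead_coeff A * lead_coeff B = 1" "int p dvd lead_coeff A"
    hence "int p dvd 1" by (metis dvd_mult2)
    thus False using pi not_prime_unit by blast
  qed
  hence ex: "\<exists>k. \<not> int p dvd coeff A k" by blast
  define k where "k = (LEAST k. \<not> int p dvd coeff A k)"
  have k1: "\<not> int p dvd coeff A k" unfolding k_def by (rule LeastI_ex[OF ex])
  have k2: "\<And>i. i < k \<Longrightarrow> int p dvd coeff A i" unfolding k_def using not_less_Least by blast
  have kd: "k \<le> degree A" using k1 le_degree by (metis dvd_0_right)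
  have "coeff F k = (\<Sum>i\<le>k. coeff A i * coeff B (k - i))" using FAB by (simp add: coeff_mult)
  also have "{..k} = insert k {..<k}" by auto
  also have "(\<Sum>i\<in>insert k {..<k}. coeff A i * coeff B (k - i))
     = coeff A k * coeff B 0 + (\<Sum>i<k. coeff A i * coeff B (k - i))" by simp
  finally have ck: "coeff F k = coeff A k * coeff B 0 + (\<Sum>i<k. coeff A i * coeff B (k - i))" .
  have "int p dvd (\<Sum>i<k. coeff A i * coeff B (k - i))" by (auto intro!: dvd_sum simp: k2)
  moreover have "\<not> int p dvd coeff A k * coeff B 0" using k1 B0 pi by (simp add: prime_dvd_mult_iff)
  ultimately have "\<not> int p dvd coeff F k" unfolding ck by (simp add: dvd_add_left_iff)
  hence "N \<le> k" using low not_le by blast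
  moreover have "degree F = degree A + degree B" using FAB A0' B0' by (simp add: degree_mult_eq)
  ultimately show ?thesis using kd dF by linarith
qed

lemma eisenstein:
  fixes F A B :: "int poly"
  assumes p: "prime p" and FAB: "F = A * B" and dF: "degree F = N" and lF: "lead_coeff F = 1"
    and low: "\<forall>k<N. int p dvd coeff F k" and c0: "\<not> int p ^ 2 dvd coeff F 0"
  shows "degree A = 0 \<or> degree B = 0"
proof (cases "N = 0")
  case True
  have "F \<noteq> 0" using lF by auto
  hence "A \<noteq> 0" "B \<noteq> 0" using FAB by auto
  hence "degree F = degree A + degree B" using FAB by (simp add: degree_mult_eq)
  thus ?thesis using True dF by simp
next
  case False
  have pi: "prime (int p)" using p by (simp add: prime_nat_int_transfer)
  have "int p dvd coeff F 0" using low False by auto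
  moreover have cF0: "coeff F 0 = coeff A 0 * coeff B 0" using FAB by (simp add: coeff_mult)
  ultimately have "int p dvd coeff A 0 \<or> int p dvd coeff B 0" using pi by (simp add: prime_dvd_mult_iff)
  moreover have "\<not> (int p dvd coeff A 0 \<and> int p dvd coeff B 0)"
  proof
    assume "int p dvd coeff A 0 \<and> int p dvd coeff B 0"
    hence "int p ^ 2 dvd coeff F 0" unfolding cF0 power2_eq_square by (simp add: mult_dvd_mono)
    thus False using c0 by simp
  qed
  ultimately consider "int p dvd coeff A 0" "\<not> int p dvd coeff B 0"
    | "int p dvd coeff B 0" "\<not> int p dvd coeff A 0" by blast
  thus ?thesis
  proof cases
    case 1 thus ?thesis using eis_aux[OF p FAB dF lF low] by simp
  next
    case 2
    have "F = B * A" using FAB by (simp add: mult.commute)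
    from eis_aux[OF p this dF lF low 2] show ?thesis by simp
  qed
qed

definition Phi :: "nat \<Rightarrow> int poly" where
  "Phi p = (\<Sum>t<p. monom 1 (p * t))"

definition Psi :: "nat \<Rightarrow> int poly" where
  "Psi p = (\<Sum>t<p. ([:1,1:] ^ p) ^ t)"

lemma Psi_pcomp: "Psi p = Phi p \<circ>\<^sub>p [:1,1:]"
proof -
  have "poly (Psi p) x = poly (Phi p \<circ>\<^sub>p [:1,1:]) x" for x
  proof -
    have "poly (Psi p) x = (\<Sum>t<p. ((1+x) ^ p) ^ t)" by (simp add: Psi_def poly_sum)
    also have "\<dots> = (\<Sum>t<p. (1+x) ^ (p * t))" by (simp add: power_mult)
    also have "\<dots> = poly (Phi p \<circ>\<^sub>p [:1,1:]) x" by (simp add: Phi_def poly_pcompose poly_sum poly_monom)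
    finally show ?thesis .
  qed
  thus ?thesis using poly_eq_poly_eq_iff by blast
qed

lemma coeff_Phi:
  assumes "p > 0"
  shows "coeff (Phi p) k = (if p dvd k \<and> k < p * p then 1 else 0)"
proof -
  have "coeff (Phi p) k = (\<Sum>t<p. if p * t = k then 1 else 0)"
    by (simp add: Phi_def coeff_sum coeff_monom)
  also have "\<dots> = (\<Sum>t<p. if p dvd k \<and> t = k div p then 1 else 0)"
    using assms by (intro sum.cong) auto
  also have "\<dots> = (if p dvd k \<and> k < p * p then 1 else 0)"
  proof (cases "p dvd k")
    case True
    then obtain m where m: "k = p * m" by blast
    have "(m < p) = (k < p * p)" using m assms by simp
    thus ?thesis using True m assms by (simp add: sum.delta)
  qed simp
  finally show ?thesis .
qed

lemma degree_Phi:
  assumes "p > 0"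
  shows "degree (Phi p) = p * (p - 1)" and "lead_coeff (Phi p) = 1"
proof -
  have c1: "coeff (Phi p) (p * (p - 1)) = 1"
    using assms by (simp add: coeff_Phi)
  have "\<forall>i>p * (p - 1). coeff (Phi p) i = 0"
  proof (intro allI impI)
    fix i assume i: "i > p * (p - 1)"
    show "coeff (Phi p) i = 0"
    proof (rule ccontr)
      assume "coeff (Phi p) i \<noteq> 0"
      hence "p dvd i" "i < p * p" using assms by (auto simp: coeff_Phi split: if_splits)
      then obtain m where m: "i = p * m" "m < p" by auto
      hence "m \<le> p - 1" by simp
      hence "i \<le> p * (p - 1)" using m by simp
      thus False using i by simp
    qed
  qed
  hence "degree (Phi p) \<le> p * (p - 1)" by (rule degree_le)
  moreover have "p * (p - 1) \<le> degree (Phi p)" using c1 by (intro le_degree) simp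
  ultimately show d: "degree (Phi p) = p * (p - 1)" by simp
  show "lead_coeff (Phi p) = 1" using d c1 by simp
qed

lemma poly_Phi_1: "poly (Phi p) 1 = int p"
  by (simp add: Phi_def poly_sum poly_monom)

lemma Psi_props:
  assumes "p > 0"
  shows "degree (Psi p) = p * (p - 1)" "lead_coeff (Psi p) = 1" "coeff (Psi p) 0 = int p"
proof -
  show "degree (Psi p) = p * (p - 1)" using degree_Phi[OF assms]
    by (simp add: Psi_pcomp degree_pcompose)
  show "lead_coeff (Psi p) = 1" using degree_Phi[OF assms]
    by (simp add: Psi_pcomp lead_coeff_comp)
  show "coeff (Psi p) 0 = int p"
    by (simp add: Psi_pcomp poly_0_coeff_0[symmetric] poly_pcompose poly_Phi_1)
qed

lemma Dv_cancel_monom: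
  assumes "Dv p (monom 1 n * h)" shows "Dv p h"
  unfolding Dv_def
proof
  fix k
  have "coeff (monom 1 n * h) (k + n) = coeff h k" by (simp add: coeff_monom_mult)
  thus "int p dvd coeff h k" using assms unfolding Dv_def by metis
qed

lemma diff_aux: "(a::'a::ab_group_add) - c - b = a - (b + c)"
  by (simp add: algebra_simps)

lemma Psi_cong:
  assumes p: "prime p"
  shows "Dv p (Psi p - monom 1 (p * (p - 1)))"
proof -
  have p0: "p > 0" using p prime_gt_0_nat by blast
  define X :: "int poly" where "X = monom 1 1"
  define S where "S = (\<Sum>t<p. (X ^ p + 1) ^ t)"
  define M :: "int poly" where "M = monom 1 (p * (p - 1))"
  have s1: "[:1,1:] = X + 1" unfolding X_def by (simp add: poly_eq_iff coeff_pCons split: nat.split)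
  have d1: "Dv p (Psi p - S)" unfolding Psi_def S_def s1
    by (intro Dv_sum_diff Dv_power_diff frob p)
  have h: "(X ^ p + 1) ^ p - 1 = X ^ p * S"
    unfolding S_def using power_diff_1_eq[of "X ^ p + 1" p] by simp
  have xm: "X ^ p * M = (X ^ p) ^ p"
  proof -
    have "p + p * (p - 1) = p * p" using p0 by (cases p) auto
    thus ?thesis unfolding X_def M_def by (simp add: monom_power mult_monom)
  qed
  have "X ^ p * (S - M) = X ^ p * S - X ^ p * M" by (simp add: right_diff_distrib)
  also have "\<dots> = (X ^ p + 1) ^ p - ((X ^ p) ^ p + 1)" unfolding xm h[symmetric] by (rule diff_aux)
  finally have eq: "X ^ p * (S - M) = (X ^ p + 1) ^ p - ((X ^ p) ^ p + 1)" .
  have "Dv p (X ^ p * (S - M))" unfolding eq by (rule frob[OF p])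
  moreover have xp: "X ^ p = monom 1 p" unfolding X_def by (simp add: monom_power)
  ultimately have "Dv p (monom 1 p * (S - M))" by (simp only: xp)
  hence d2: "Dv p (S - M)" by (rule Dv_cancel_monom)
  have "Psi p - M = (Psi p - S) + (S - M)" by simp
  thus ?thesis using d1 d2 Dv_add unfolding M_def by metis
qed

lemma Phi_irreducible:
  assumes p: "prime p"
  shows "irreducible (Phi p)"
proof -
  have p1: "p > 1" using p prime_gt_1_nat by blast
  hence p0: "p > 0" by simp
  have dP: "degree (Phi p) > 0" using degree_Phi(1)[OF p0] p1 by simp
  show ?thesis
  proof (rule irreducibleI)
    show "Phi p \<noteq> 0" using dP by auto
    show "\<not> Phi p dvd 1" using dP by (auto simp: is_unit_poly_iff)
  next
    fix a b assume ab: "Phi p = a * b"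
    have PAB: "Psi p = (a \<circ>\<^sub>p [:1,1:]) * (b \<circ>\<^sub>p [:1,1:])"
      by (simp add: Psi_pcomp ab pcompose_mult)
    have low: "\<forall>k<p * (p - 1). int p dvd coeff (Psi p) k"
    proof (intro allI impI)
      fix k assume "k < p * (p - 1)"
      hence "coeff (Psi p - monom 1 (p * (p - 1))) k = coeff (Psi p) k" by (simp add: coeff_monom)
      moreover have "int p dvd coeff (Psi p - monom 1 (p * (p - 1))) k"
        using Psi_cong[OF p] unfolding Dv_def by blast
      ultimately show "int p dvd coeff (Psi p) k" by simp
    qed
    have c0: "\<not> int p ^ 2 dvd coeff (Psi p) 0"
    proof
      assume "int p ^ 2 dvd coeff (Psi p) 0"
      hence "int p * int p dvd int p" using Psi_props(3)[OF p0] by (simp add: power2_eq_square)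
      hence "int p * int p \<le> int p" using p0 by (intro zdvd_imp_le) auto
      hence "p * p \<le> p" by (simp flip: of_nat_mult)
      moreover have "p * 1 < p * p" using p1 by (intro mult_strict_left_mono) auto
      ultimately show False by simp
    qed
    have "degree (a \<circ>\<^sub>p [:1,1:]) = 0 \<or> degree (b \<circ>\<^sub>p [:1,1:]) = 0"
      by (rule eisenstein[OF p PAB Psi_props(1)[OF p0] Psi_props(2)[OF p0] low c0])
    hence deg: "degree a = 0 \<or> degree b = 0" by (simp add: degree_pcompose)
    have lab: "lead_coeff a * lead_coeff b = 1"
      using degree_Phi(2)[OF p0] ab by (simp add: lead_coeff_mult)
    from deg show "a dvd 1 \<or> b dvd 1"
    proof
      assume "degree a = 0"
      then obtain c where c: "a = [:c:]" by (elim degree_eq_zeroE)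
      have "c * lead_coeff b = 1" using lab c by simp
      hence "c dvd 1" by (metis dvdI)
      thus ?thesis using c is_unit_poly_iff by blast
    next
      assume "degree b = 0"
      then obtain c where c: "b = [:c:]" by (elim degree_eq_zeroE)
      have "c * lead_coeff a = 1" using lab c by (simp add: mult.commute)
      hence "c dvd 1" by (metis dvdI)
      thus ?thesis using c is_unit_poly_iff by blast
    qed
  qed
qed

definition ip :: "int poly \<Rightarrow> complex \<Rightarrow> complex" where
  "ip f x = poly (map_poly of_int f) x"

lemma map_poly_of_int_add: "map_poly (of_int :: int \<Rightarrow> complex) (f + g) = map_poly of_int f + map_poly of_int g"
  by (intro poly_eqI) (simp add: coeff_map_poly)

lemma map_poly_of_int_mult: "map_poly (of_int :: int \<Rightarrow> complex) (f * g) = map_poly of_int f * map_poly of_int g"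
proof (induction f rule: pCons_induct)
  case 0 thus ?case by simp
next
  case (pCons a f)
  have "map_poly (of_int :: int \<Rightarrow> complex) (pCons a f * g) = map_poly of_int (smult a g + pCons 0 (f * g))"
    by simp
  also have "\<dots> = smult (of_int a) (map_poly of_int g) + pCons 0 (map_poly of_int f * map_poly of_int g)"
    by (simp add: map_poly_of_int_add map_poly_smult map_poly_pCons pCons.IH)
  also have "\<dots> = map_poly of_int (pCons a f) * map_poly (of_int :: int \<Rightarrow> complex) g"
    by (simp add: map_poly_pCons)
  finally show ?case .
qed

lemma ip_add[simp]: "ip (f + g) x = ip f x + ip g x"
  by (simp add: ip_def map_poly_of_int_add)

lemma ip_mult[simp]: "ip (f * g) x = ip f x * ip g x"
  by (simp add: ip_def map_poly_of_int_mult)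

lemma ip_smult[simp]: "ip (smult c f) x = of_int c * ip f x"
  by (simp add: ip_def map_poly_smult)

lemma ip_const[simp]: "ip [:c:] x = of_int c"
  by (simp add: ip_def map_poly_pCons)

lemma ip_monom[simp]: "ip (monom c n) x = of_int c * x ^ n"
  by (simp add: ip_def map_poly_monom poly_monom)

lemma ip_zero[simp]: "ip 0 x = 0" by (simp add: ip_def)

lemma ip_sum: "ip (\<Sum>i\<in>S. f i) x = (\<Sum>i\<in>S. ip (f i) x)"
  by (induction S rule: infinite_finite_induct) auto

definition zeta :: "nat \<Rightarrow> complex" where
  "zeta p = exp (2 * of_real pi * \<i> / of_nat (p ^ 2))"

lemma zeta_pow: "zeta p ^ n = exp (2 * of_real pi * \<i> * of_nat n / of_nat (p ^ 2))"
proof -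
  have "zeta p ^ n = exp (of_nat n * (2 * of_real pi * \<i> / of_nat (p ^ 2)))"
    unfolding zeta_def by (rule exp_of_nat_mult[symmetric])
  thus ?thesis by (simp add: field_simps)
qed

lemma zeta_pow_eq_1:
  assumes "p > 0" shows "zeta p ^ n = 1 \<longleftrightarrow> p ^ 2 dvd n"
  unfolding zeta_pow using complex_root_unity_eq_1[of "p^2" n] assms by simp

lemma ip_Phi_zeta:
  assumes p: "prime p" shows "ip (Phi p) (zeta p) = 0"
proof -
  have p1: "p > 1" using p prime_gt_1_nat by blast
  define w where "w = zeta p ^ p"
  have "ip (Phi p) (zeta p) = (\<Sum>t<p. zeta p ^ (p * t))" by (simp add: Phi_def ip_sum)
  also have "\<dots> = (\<Sum>t<p. w ^ t)" by (simp add: w_def power_mult)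
  also have "\<dots> = (w ^ p - 1) / (w - 1)"
  proof (rule geometric_sum)
    show "w \<noteq> 1" unfolding w_def using p1 zeta_pow_eq_1[of p p]
      by (auto simp: power2_eq_square dest: dvd_imp_le)
  qed
  also have "w ^ p = 1" unfolding w_def using p1 zeta_pow_eq_1[of p "p * p"]
    by (simp add: power_mult[symmetric] power2_eq_square)
  finally show ?thesis by simp
qed

lemma min_degree:
  assumes p: "prime p"
  shows "m \<noteq> 0 \<Longrightarrow> ip m (zeta p) = 0 \<Longrightarrow> p * (p - 1) \<le> degree m"
proof (induction "degree m" arbitrary: m rule: less_induct)
  case less
  have p0: "p > 0" using p prime_gt_0_nat by blast
  have irr: "prime_elem (Phi p)" using Phi_irreducible[OF p] by (rule irreducible_imp_prime_elem)
  have Phi0: "Phi p \<noteq> 0" using degree_Phi(2)[OF p0] by auto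
  obtain q r where qr: "pseudo_divmod (Phi p) m = (q, r)" by (cases "pseudo_divmod (Phi p) m")
  define c where "c = lead_coeff m ^ (Suc (degree (Phi p)) - degree m)"
  have c0: "c \<noteq> 0" unfolding c_def using less.prems by simp
  have eq: "smult c (Phi p) = m * q + r" unfolding c_def by (rule pseudo_divmod(1)[OF less.prems(1) qr])
  have rd: "r = 0 \<or> degree r < degree m" by (rule pseudo_divmod(2)[OF less.prems(1) qr])
  have "ip (smult c (Phi p)) (zeta p) = ip m (zeta p) * ip q (zeta p) + ip r (zeta p)"
    unfolding eq by simp
  hence ir: "ip r (zeta p) = 0" using ip_Phi_zeta[OF p] less.prems(2) by simp
  show ?case
  proof (cases "r = 0")
    case False
    hence "degree r < degree m" using rd by simp
    hence "p * (p - 1) \<le> degree r" using less.hyps[of r] False ir by simp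
    thus ?thesis using \<open>degree r < degree m\<close> by simp
  next
    case True
    have "Phi p dvd m * q"
    proof -
      have "Phi p dvd smult c (Phi p)" by (simp add: dvd_smult)
      thus ?thesis using eq True by simp
    qed
    hence "Phi p dvd m \<or> Phi p dvd q" using irr by (simp add: prime_elem_dvd_mult_iff)
    thus ?thesis
    proof
      assume "Phi p dvd m"
      hence "degree (Phi p) \<le> degree m" using less.prems(1) by (rule dvd_imp_degree_le)
      thus ?thesis using degree_Phi(1)[OF p0] by simp
    next
      assume "Phi p dvd q"
      then obtain q' where q': "q = Phi p * q'" by (elim dvdE)
      have h1: "smult c (Phi p) = Phi p * (m * q')" using eq True q'
        by (simp add: mult.left_commute)
      have h2: "smult c (Phi p) = Phi p * [:c:]" by simp
      have "Phi p * [:c:] = Phi p * (m * q')" by (rule trans[OF h2[symmetric] h1])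
      hence cm: "[:c:] = m * q'" using Phi0 by (metis mult_cancel_left)
      hence q'0: "q' \<noteq> 0" using c0 by auto
      have "degree (m * q') = degree m + degree q'" using less.prems(1) q'0 by (rule degree_mult_eq)
      moreover have "degree (m * q') = 0" using cm[symmetric] by simp
      ultimately have "degree m = 0" by simp
      then obtain a where a: "m = [:a:]" by (elim degree_eq_zeroE)
      hence "a \<noteq> 0" using less.prems(1) by simp
      moreover have "ip m (zeta p) = of_int a" using a by simp
      ultimately show ?thesis using less.prems(2) by simp
    qed
  qed
qed

lemma zeta_pow_p2: "p > 0 \<Longrightarrow> zeta p ^ (p ^ 2) = 1"
  using zeta_pow_eq_1[of p "p^2"] by simp

lemma zeta_pow_mod: assumes "p > 0" shows "zeta p ^ n = zeta p ^ (n mod p ^ 2)"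
proof -
  have "zeta p ^ n = zeta p ^ (n mod p ^ 2 + p ^ 2 * (n div p ^ 2))" by simp
  also have "\<dots> = zeta p ^ (n mod p ^ 2) * (zeta p ^ (p ^ 2)) ^ (n div p ^ 2)"
    by (simp only: power_add power_mult)
  finally show ?thesis using zeta_pow_p2[OF assms] by simp
qed

lemma norm_zeta_pow: "norm (zeta p ^ n) = 1"
  by (simp add: zeta_def norm_power norm_exp_eq_Re)

lemma cnj_unit: fixes w :: complex assumes "norm w = 1" shows "cnj w * w = 1"
proof -
  have "cnj w * w = of_real ((norm w)^2)" by (metis complex_norm_square mult.commute of_real_power)
  thus ?thesis using assms by simp
qed

lemma chi_zeta:
  assumes "p > 0"
  shows "chi p b a = zeta p ^ (fst a * fst b + p * snd a * snd b)"
proof -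
  have r: "real (fst a) * real (fst b) / real (p^2) + real (snd a) * real (snd b) / real p
      = real (fst a * fst b + p * snd a * snd b) / real (p ^ 2)"
    using assms by (simp add: field_simps power2_eq_square)
  have "chi p b a = exp (2 * of_real pi * \<i> * of_real (real (fst a * fst b + p * snd a * snd b) / real (p ^ 2)))"
    unfolding chi_def r ..
  also have "\<dots> = exp (2 * of_real pi * \<i> * of_nat (fst a * fst b + p * snd a * snd b) / of_nat (p ^ 2))"
    by (simp only: of_real_divide of_real_of_nat_eq mult.assoc times_divide_eq_right)
  also have "\<dots> = zeta p ^ (fst a * fst b + p * snd a * snd b)" by (simp only: zeta_pow)
  finally show ?thesis .
qed

definition phi :: "nat \<Rightarrow> nat \<times> nat \<Rightarrow> nat \<times> nat \<Rightarrow> nat" where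
  "phi p b a = (fst a * fst b + p * snd a * snd b) mod p ^ 2"

lemma chi_phi: "p > 0 \<Longrightarrow> chi p b a = zeta p ^ phi p b a"
  unfolding phi_def using chi_zeta zeta_pow_mod by metis

lemma phi_less: "p > 0 \<Longrightarrow> phi p b a < p ^ 2"
  by (simp add: phi_def)

definition PA :: "nat \<Rightarrow> nat \<times> nat \<Rightarrow> (nat \<times> nat) set \<Rightarrow> int poly" where
  "PA p b A = (\<Sum>a\<in>A. monom 1 (phi p b a))"

lemma coeff_PA: "finite A \<Longrightarrow> coeff (PA p b A) r = int (card {a\<in>A. phi p b a = r})"
proof -
  assume fin: "finite A"
  have "coeff (PA p b A) r = (\<Sum>a\<in>A. if phi p b a = r then 1 else 0)"
    by (simp add: PA_def coeff_sum coeff_monom)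
  also have "\<dots> = (\<Sum>a\<in>{a\<in>A. phi p b a = r}. 1)"
    using fin by (simp add: sum.If_cases Int_def)
  finally show ?thesis by simp
qed

lemma poly_PA_1: "poly (PA p b A) 1 = int (card A)"
  by (simp add: PA_def poly_sum poly_monom)

lemma ip_PA: "p > 0 \<Longrightarrow> ip (PA p b A) (zeta p) = (\<Sum>a\<in>A. chi p b a)"
  by (simp add: PA_def ip_sum chi_phi)

lemma coeff_Phi_mult:
  assumes p0: "p > 0" and s: "s < p" and t0: "t0 < p" and dq: "\<forall>j\<ge>p. coeff q j = 0"
  shows "coeff (Phi p * q) (s + p * t0) = coeff q s"
proof -
  have "Phi p * q = (\<Sum>t<p. monom 1 (p * t) * q)" by (simp add: Phi_def sum_distrib_right)
  hence "coeff (Phi p * q) (s + p * t0) = (\<Sum>t<p. coeff (monom 1 (p * t) * q) (s + p * t0))"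
    by (simp add: coeff_sum)
  also have "\<dots> = (\<Sum>t<p. if t = t0 then coeff q s else 0)"
  proof (rule sum.cong[OF refl])
    fix t assume "t \<in> {..<p}"
    show "coeff (monom 1 (p * t) * q) (s + p * t0) = (if t = t0 then coeff q s else 0)"
    proof (cases "t = t0")
      case True thus ?thesis by (simp add: coeff_monom_mult)
    next
      case False
      show ?thesis
      proof (cases "t < t0")
        case True
        have "p * Suc t \<le> p * t0" using True by (intro mult_le_mono2) simp
        hence "s + p * t0 - p * t \<ge> p" by simp
        hence "coeff q (s + p * t0 - p * t) = 0" using dq by blast
        thus ?thesis using False by (simp add: coeff_monom_mult)
      next
        case nlt: False
        hence "p * Suc t0 \<le> p * t" using False by (intro mult_le_mono2) simp
        hence "s + p * t0 < p * t" using s by simp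
        thus ?thesis using False by (simp add: coeff_monom_mult)
      qed
    qed
  qed
  also have "\<dots> = coeff q s" using t0 by simp
  finally show ?thesis .
qed

lemma zstructure:
  assumes p: "prime p" and fin: "finite A" and cA: "card A = p" and hz: "hat1 p A b = 0"
  shows "\<exists>s0<p. (\<forall>a\<in>A. phi p b a mod p = s0) \<and> inj_on (phi p b) A"
proof -
  have p1: "p > 1" using p prime_gt_1_nat by blast
  hence p0: "p > 0" by simp
  define P where "P = PA p b A"
  have "cnj (\<Sum>a\<in>A. chi p b a) = 0" using hz by (simp add: hat1_def cnj_sum)
  hence "(\<Sum>a\<in>A. chi p b a) = 0" by (simp only: complex_cnj_zero_iff)
  hence ipP: "ip P (zeta p) = 0" unfolding P_def using ip_PA[OF p0] by simp
  obtain q r where qr: "pseudo_divmod P (Phi p) = (q, r)" by (cases "pseudo_divmod P (Phi p)")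
  have Phi0: "Phi p \<noteq> 0" using degree_Phi(2)[OF p0] by auto
  have "smult (lead_coeff (Phi p) ^ (Suc (degree P) - degree (Phi p))) P = Phi p * q + r"
    by (rule pseudo_divmod(1)[OF Phi0 qr])
  hence eq: "P = Phi p * q + r" using degree_Phi(2)[OF p0] by simp
  have rd: "r = 0 \<or> degree r < degree (Phi p)" by (rule pseudo_divmod(2)[OF Phi0 qr])
  have "ip r (zeta p) = 0" using ipP ip_Phi_zeta[OF p] by (simp add: eq)
  hence "r = 0" using rd min_degree[OF p, of r] degree_Phi(1)[OF p0] by linarith
  hence Pq: "P = Phi p * q" using eq by simp
  have P1: "poly P 1 = int p" unfolding P_def using cA by (simp add: poly_PA_1)
  hence "poly q 1 = 1" using p0 by (simp add: Pq poly_Phi_1)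
  have cP: "\<And>r. coeff P r = int (card {a\<in>A. phi p b a = r})" unfolding P_def using fin by (rule coeff_PA)
  have Pbig: "\<forall>i>p ^ 2 - 1. coeff P i = 0"
  proof (intro allI impI)
    fix i assume "i > p ^ 2 - 1"
    hence ge: "p ^ 2 \<le> i" by linarith
    have "\<forall>a. phi p b a \<noteq> i" using phi_less[OF p0, of b] ge by (metis not_le)
    hence "{a\<in>A. phi p b a = i} = {}" by blast
    thus "coeff P i = 0" using cP[of i] by (metis card.empty of_nat_0)
  qed
  have P0: "P \<noteq> 0" using P1 p0 by auto
  hence q0: "q \<noteq> 0" using Pq by auto
  have "degree P \<le> p ^ 2 - 1" using Pbig by (rule degree_le)
  moreover have "degree P = p * (p - 1) + degree q" using Pq Phi0 q0 degree_Phi(1)[OF p0]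
    by (simp add: degree_mult_eq)
  moreover have "p ^ 2 - 1 = p * (p - 1) + (p - 1)" using p0 by (cases p) (auto simp: power2_eq_square)
  ultimately have dq: "degree q < p" using p0 by linarith
  hence dq': "\<forall>j\<ge>p. coeff q j = 0" by (auto intro: coeff_eq_0)
  have cPq: "\<And>s t. s < p \<Longrightarrow> t < p \<Longrightarrow> coeff P (s + p * t) = coeff q s"
    unfolding Pq using p0 dq' by (intro coeff_Phi_mult) auto
  have qnn: "\<And>s. s < p \<Longrightarrow> coeff q s \<ge> 0" using cPq[of _ 0] p0 cP by (metis add_0_right mult_0_right of_nat_0_le_iff)
  have "poly q 1 = (\<Sum>s\<le>degree q. coeff q s)" by (simp add: poly_altdef)
  also have "\<dots> = (\<Sum>s<p. coeff q s)"
    using dq dq' by (intro sum.mono_neutral_left) (auto intro: le_degree)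
  finally have qsum: "(\<Sum>s<p. coeff q s) = 1" using \<open>poly q 1 = 1\<close> by simp
  have decomp: "\<And>a. a \<in> A \<Longrightarrow> phi p b a = phi p b a mod p + p * (phi p b a div p) \<and> phi p b a mod p < p \<and> phi p b a div p < p"
  proof -
    fix a assume "a \<in> A"
    have "phi p b a < p * p" using phi_less[OF p0, of b a] by (simp add: power2_eq_square)
    hence "phi p b a div p < p" by (simp add: less_mult_imp_div_less)
    thus "phi p b a = phi p b a mod p + p * (phi p b a div p) \<and> phi p b a mod p < p \<and> phi p b a div p < p"
      using p0 by simp
  qed
  have fib: "\<And>a. a \<in> A \<Longrightarrow> coeff q (phi p b a mod p) = int (card {a'\<in>A. phi p b a' = phi p b a})"
    using decomp cPq cP by metis
  have fib1: "\<And>a. a \<in> A \<Longrightarrow> coeff q (phi p b a mod p) \<ge> 1"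
  proof -
    fix a assume a: "a \<in> A"
    have mem: "a \<in> {a'\<in>A. phi p b a' = phi p b a}" using a by simp
    have fs: "finite {a'\<in>A. phi p b a' = phi p b a}" using fin by simp
    have "card {a'\<in>A. phi p b a' = phi p b a} > 0" using mem fs card_gt_0_iff by blast
    thus "coeff q (phi p b a mod p) \<ge> 1" using fib[OF a] by simp
  qed
  have le1: "\<And>s. s < p \<Longrightarrow> coeff q s \<le> 1"
  proof -
    fix s assume s: "s < p"
    have "coeff q s \<le> (\<Sum>s<p. coeff q s)" using s qnn by (intro member_le_sum) auto
    thus "coeff q s \<le> 1" using qsum by simp
  qed
  have same: "\<forall>a\<in>A. \<forall>a'\<in>A. phi p b a mod p = phi p b a' mod p"
  proof (intro ballI, rule ccontr)
    fix a a' assume a: "a \<in> A" and a': "a' \<in> A" and ne: "phi p b a mod p \<noteq> phi p b a' mod p"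
    have "(\<Sum>s\<in>{phi p b a mod p, phi p b a' mod p}. coeff q s) \<le> (\<Sum>s<p. coeff q s)"
      using decomp[OF a] decomp[OF a'] qnn by (intro sum_mono2) auto
    moreover have "(\<Sum>s\<in>{phi p b a mod p, phi p b a' mod p}. coeff q s) \<ge> 2"
      using ne fib1[OF a] fib1[OF a'] by simp
    ultimately show False using qsum by simp
  qed
  have inj: "inj_on (phi p b) A"
  proof (rule inj_onI)
    fix a a' assume a: "a \<in> A" and a': "a' \<in> A" and e: "phi p b a = phi p b a'"
    have "int (card {x\<in>A. phi p b x = phi p b a}) \<le> 1" using fib[OF a] le1 decomp[OF a] by metis
    hence "card {x\<in>A. phi p b x = phi p b a} \<le> 1" by simp
    moreover have "a \<in> {x\<in>A. phi p b x = phi p b a}" "a' \<in> {x\<in>A. phi p b x = phi p b a}" using a a' e by auto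
    ultimately show "a = a'" using fin by (metis (no_types, lifting) card_le_Suc0_iff_eq finite_subset mem_Collect_eq subsetI One_nat_def)
  qed
  obtain a0 where a0: "a0 \<in> A" using cA p0 by (metis card.empty ex_in_conv less_irrefl)
  show ?thesis
    using same a0 inj decomp[OF a0] by blast
qed

lemma modar: fixes x y u v k p :: nat
  shows "(x * (k * y mod p ^ 2) + p * u * (k * v mod p)) mod p ^ 2 = ((x * y + p * u * v) * k) mod p ^ 2"
proof -
  define m where "m = p ^ 2"
  have e0: "p * (k * v mod p) = (p * (k * v)) mod m" unfolding m_def power2_eq_square by (rule mult_mod_right)
  have e1: "p * u * (k * v mod p) = u * ((p * (k * v)) mod m)" using e0 by (simp add: mult.commute mult.left_commute)
  have "(x * (k * y mod m) + p * u * (k * v mod p)) mod m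
      = (x * (k * y mod m) + u * ((p * (k * v)) mod m)) mod m" by (simp only: e1)
  also have "\<dots> = ((x * (k * y mod m)) mod m + (u * ((p * (k * v)) mod m)) mod m) mod m"
    by (simp only: mod_add_eq)
  also have "\<dots> = ((x * (k * y)) mod m + (u * (p * (k * v))) mod m) mod m"
    by (simp only: mod_mult_right_eq)
  also have "\<dots> = (x * (k * y) + u * (p * (k * v))) mod m"
    by (simp only: mod_add_eq)
  also have "x * (k * y) + u * (p * (k * v)) = (x * y + p * u * v) * k" by (simp add: algebra_simps)
  finally show ?thesis unfolding m_def .
qed

lemma AR: fixes i j p :: nat assumes "i < p" "j < p" "p dvd i + j * (p ^ 2 - 1)" shows "i = j"
proof -
  have p0: "p > 0" using assms by simp
  have eq: "i + j * (p ^ 2 - 1) + j = i + p * (p * j)"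
  proof -
    have "p ^ 2 \<ge> 1" using p0 by simp
    hence "j * (p ^ 2 - 1) + j = j * p ^ 2" by (simp add: diff_mult_distrib2)
    thus ?thesis by (simp add: power2_eq_square algebra_simps)
  qed
  have "(i + j * (p ^ 2 - 1) + j) mod p = i mod p" unfolding eq by simp
  moreover have "(i + j * (p ^ 2 - 1) + j) mod p = j mod p" using assms(3)
    by (metis add.commute dvd_imp_mod_0 mod_add_right_eq add_0)
  ultimately show ?thesis using assms by simp
qed

lemma chi_kb:
  assumes "p > 0"
  shows "chi p ((k * fst b) mod p ^ 2, (k * snd b) mod p) a = chi p b a ^ k"
proof -
  have "chi p ((k * fst b) mod p ^ 2, (k * snd b) mod p) a
      = zeta p ^ (fst a * (k * fst b mod p ^ 2) + p * snd a * (k * snd b mod p))"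
    using chi_zeta[OF assms] by simp
  also have "\<dots> = zeta p ^ ((fst a * (k * fst b mod p ^ 2) + p * snd a * (k * snd b mod p)) mod p ^ 2)"
    by (rule zeta_pow_mod[OF assms])
  also have "\<dots> = zeta p ^ (((fst a * fst b + p * snd a * snd b) * k) mod p ^ 2)"
    by (simp only: modar)
  also have "\<dots> = zeta p ^ ((fst a * fst b + p * snd a * snd b) * k)"
    by (rule zeta_pow_mod[OF assms, symmetric])
  also have "\<dots> = chi p b a ^ k" by (simp add: chi_zeta[OF assms] power_mult)
  finally show ?thesis .
qed

lemma cnj_zeta_pow:
  assumes "p > 0" shows "cnj (zeta p ^ n) = zeta p ^ (n * (p ^ 2 - 1))"
proof -
  define x where "x = zeta p ^ n"
  define y where "y = zeta p ^ (n * (p ^ 2 - 1))"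
  have "p ^ 2 \<ge> 1" using assms by simp
  hence "n + n * (p ^ 2 - 1) = p ^ 2 * n" by (simp add: diff_mult_distrib2 algebra_simps)
  hence "x * y = (zeta p ^ (p ^ 2)) ^ n" unfolding x_def y_def by (simp add: power_add[symmetric] power_mult[symmetric])
  hence xy: "x * y = 1" using zeta_pow_p2[OF assms] by simp
  have cx: "cnj x * x = 1" unfolding x_def using norm_zeta_pow by (rule cnj_unit)
  have "cnj x = cnj x * (x * y)" using xy by simp
  also have "\<dots> = (cnj x * x) * y" by (simp only: mult.assoc)
  finally have "cnj x = (cnj x * x) * y" .
  hence "cnj x = y" using cx by simp
  thus ?thesis unfolding x_def y_def .
qed

lemma GS:
  assumes p: "prime p" and E: "\<not> p dvd E"
  shows "(\<Sum>j<p. zeta p ^ (p * E * j)) = 0"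
proof -
  have p0: "p > 0" using p prime_gt_0_nat by blast
  define x where "x = zeta p ^ (p * E)"
  have "x \<noteq> 1"
  proof
    assume "x = 1"
    hence "p ^ 2 dvd p * E" unfolding x_def using zeta_pow_eq_1[OF p0] by simp
    hence "p * p dvd p * E" by (simp add: power2_eq_square)
    thus False using E p0 by simp
  qed
  moreover have "x ^ p = 1"
  proof -
    have "p ^ 2 dvd p * E * p" by (simp add: power2_eq_square)
    hence "zeta p ^ (p * E * p) = 1" using zeta_pow_eq_1[OF p0] by simp
    thus ?thesis unfolding x_def by (simp add: power_mult)
  qed
  moreover have "(\<Sum>j<p. zeta p ^ (p * E * j)) = (\<Sum>j<p. x ^ j)" unfolding x_def by (simp add: power_mult)
  ultimately show ?thesis using geometric_sum[of x p] by simp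
qed

lemma Gset_finite: "finite (Gset p)" by (simp add: Gset_def)

lemma exp_id1:
  fixes s0 ta tb p :: nat assumes "p > 0"
  shows "(s0 + p * ta) + (s0 + p * tb) * (p ^ 2 - 1) = p ^ 2 * s0 + p * (ta + tb * (p ^ 2 - 1))"
proof -
  obtain M where M: "p ^ 2 = Suc M" using assms by (cases "p ^ 2") auto
  show ?thesis unfolding M by (simp add: algebra_simps)
qed

lemma spectral_main:
  assumes p: "prime p" and AG: "A \<subseteq> Gset p" and cA: "card A = p" and s0: "s0 < p"
    and res: "\<forall>a\<in>A. phi p b a mod p = s0" and inj: "inj_on (phi p b) A"
  shows "spectral p A"
proof -
  have p0: "p > 0" using p prime_gt_0_nat by blast
  have fin: "finite A" using AG Gset_finite finite_subset by blast
  obtain M where M1: "p ^ 2 - 1 = M" by blast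
  define \<tau> where "\<tau> a = phi p b a div p" for a
  have phis: "\<And>a. a \<in> A \<Longrightarrow> phi p b a = s0 + p * \<tau> a"
    unfolding \<tau>_def using res by (metis mod_mult_div_eq)
  have \<tau>lt: "\<And>a. \<tau> a < p"
  proof -
    fix a
    have "phi p b a < p * p" using phi_less[OF p0, of b a] by (simp add: power2_eq_square)
    thus "\<tau> a < p" unfolding \<tau>_def by (simp add: less_mult_imp_div_less)
  qed
  have inj\<tau>: "inj_on \<tau> A"
  proof (rule inj_onI)
    fix a a' assume "a \<in> A" "a' \<in> A" "\<tau> a = \<tau> a'"
    hence "phi p b a = phi p b a'" using phis by metis
    thus "a = a'" using inj_onD[OF inj _ \<open>a \<in> A\<close> \<open>a' \<in> A\<close>] by blast
  qed
  have bij: "bij_betw \<tau> A {..<p}"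
  proof -
    have sub: "\<tau> ` A \<subseteq> {..<p}" using \<tau>lt by auto
    have "card (\<tau> ` A) = card {..<p}" using card_image[OF inj\<tau>] cA by simp
    hence "\<tau> ` A = {..<p}" using sub by (intro card_subset_eq) auto
    thus ?thesis using inj\<tau> by (simp add: bij_betw_def)
  qed
  have w: "\<And>a. a \<in> A \<Longrightarrow> chi p b a = zeta p ^ (s0 + p * \<tau> a)"
    using chi_phi[OF p0] phis by metis
  have nw: "\<And>a. norm (chi p b a) = 1" using chi_phi[OF p0] norm_zeta_pow by metis
  define kb where "kb k = ((k * fst b) mod p ^ 2, (k * snd b) mod p)" for k
  have ck: "\<And>k a. chi p (kb k) a = chi p b a ^ k" unfolding kb_def using chi_kb[OF p0] by blast
  have reidx: "\<And>g. (\<Sum>a\<in>A. g (\<tau> a)) = (\<Sum>j<p. g j)"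
    using sum.reindex_bij_betw[OF bij] by blast
  have orth: "\<And>k k'. k < p \<Longrightarrow> k' < p \<Longrightarrow>
      (\<Sum>a\<in>A. chi p (kb k) a * cnj (chi p (kb k') a)) = (if k = k' then of_nat p else 0)"
  proof -
    fix k k' assume k: "k < p" and k': "k' < p"
    show "(\<Sum>a\<in>A. chi p (kb k) a * cnj (chi p (kb k') a)) = (if k = k' then of_nat p else 0)"
    proof (cases "k = k'")
      case True
      have nk: "norm (chi p (kb k) a) = 1" for a using nw[of a] by (simp add: ck norm_power)
      have "chi p (kb k) a * cnj (chi p (kb k') a) = 1" for a
        using cnj_unit[OF nk[of a]] True by (metis mult.commute)
      thus ?thesis using True cA by simp
    next
      case False
      define e where "e = k + k' * (p ^ 2 - 1)"
      have ne: "\<not> p dvd e" unfolding e_def using AR[OF k k'] False by blast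
      have tm: "chi p (kb k) a * cnj (chi p (kb k') a) = zeta p ^ (s0 * e) * zeta p ^ (p * e * \<tau> a)"
        if a: "a \<in> A" for a
      proof -
        have "chi p (kb k) a * cnj (chi p (kb k') a)
            = zeta p ^ ((s0 + p * \<tau> a) * k) * cnj (zeta p ^ ((s0 + p * \<tau> a) * k'))"
          using ck w[OF a] by (simp add: power_mult)
        also have "\<dots> = zeta p ^ ((s0 + p * \<tau> a) * k) * zeta p ^ ((s0 + p * \<tau> a) * k' * (p ^ 2 - 1))"
          by (simp only: cnj_zeta_pow[OF p0])
        also have "\<dots> = zeta p ^ ((s0 + p * \<tau> a) * k + (s0 + p * \<tau> a) * k' * (p ^ 2 - 1))"
          by (simp only: power_add)
        also have "(s0 + p * \<tau> a) * k + (s0 + p * \<tau> a) * k' * (p ^ 2 - 1) = s0 * e + p * e * \<tau> a"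
          unfolding e_def by (simp only: M1) (simp add: algebra_simps)
        also have "zeta p ^ (s0 * e + p * e * \<tau> a) = zeta p ^ (s0 * e) * zeta p ^ (p * e * \<tau> a)"
          by (simp only: power_add)
        finally show ?thesis .
      qed
      have "(\<Sum>a\<in>A. chi p (kb k) a * cnj (chi p (kb k') a)) = (\<Sum>a\<in>A. zeta p ^ (s0 * e) * zeta p ^ (p * e * \<tau> a))"
        using tm by (rule sum.cong[OF refl])
      also have "\<dots> = zeta p ^ (s0 * e) * (\<Sum>a\<in>A. zeta p ^ (p * e * \<tau> a))"
        by (simp add: sum_distrib_left)
      also have "(\<Sum>a\<in>A. zeta p ^ (p * e * \<tau> a)) = (\<Sum>j<p. zeta p ^ (p * e * j))"
        by (rule reidx)
      also have "\<dots> = 0" by (rule GS[OF p ne])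
      finally show ?thesis using False by simp
    qed
  qed
  have injk: "inj_on kb {..<p}"
  proof (rule inj_onI)
    fix k k' assume k: "k \<in> {..<p}" and k': "k' \<in> {..<p}" and e: "kb k = kb k'"
    have "(\<Sum>a\<in>A. chi p (kb k) a * cnj (chi p (kb k') a)) = (if k = k' then of_nat p else 0)"
      using k k' orth by simp
    moreover have "(\<Sum>a\<in>A. chi p (kb k) a * cnj (chi p (kb k') a)) = of_nat p"
      using orth[of k k] k unfolding e by simp
    ultimately show "k = k'" using p0 by (cases "k = k'") auto
  qed
  define B where "B = kb ` {..<p}"
  have BG: "B \<subseteq> Gset p" unfolding B_def kb_def Gset_def using p0 by auto
  have orthB: "\<forall>x\<in>B. \<forall>x'\<in>B. x \<noteq> x' \<longrightarrow> (\<Sum>a\<in>A. chi p x a * cnj (chi p x' a)) = 0"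
  proof (intro ballI impI)
    fix x x' assume x: "x \<in> B" and x': "x' \<in> B" and ne: "x \<noteq> x'"
    obtain k where k: "k < p" "x = kb k" using x unfolding B_def by blast
    obtain k' where k': "k' < p" "x' = kb k'" using x' unfolding B_def by blast
    have "k \<noteq> k'" using ne k k' by blast
    thus "(\<Sum>a\<in>A. chi p x a * cnj (chi p x' a)) = 0" using orth[OF k(1) k'(1)] k k' by simp
  qed
  have span: "\<forall>f :: nat \<times> nat \<Rightarrow> complex. \<exists>c :: nat \<times> nat \<Rightarrow> complex.
        \<forall>a\<in>A. f a = (\<Sum>x\<in>B. c x * chi p x a)"
  proof
    fix f :: "nat \<times> nat \<Rightarrow> complex"
    define c where "c x = (1 / of_nat p) * (\<Sum>a'\<in>A. f a' * cnj (chi p x a'))" for x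
    have inner: "(\<Sum>k<p. (chi p b a * cnj (chi p b a')) ^ k) = (if a' = a then of_nat p else 0)"
      if a: "a \<in> A" and a': "a' \<in> A" for a a'
    proof (cases "a' = a")
      case True
      have "chi p b a * cnj (chi p b a) = 1" using cnj_unit[OF nw[of a]] by (simp add: mult.commute)
      thus ?thesis using True by simp
    next
      case False
      define E where "E = \<tau> a + \<tau> a' * (p ^ 2 - 1)"
      have "\<tau> a \<noteq> \<tau> a'" using False inj\<tau> a a' by (metis inj_onD)
      hence ne: "\<not> p dvd E" unfolding E_def using AR[OF \<tau>lt \<tau>lt] by blast
      have "chi p b a * cnj (chi p b a') = zeta p ^ (s0 + p * \<tau> a) * zeta p ^ ((s0 + p * \<tau> a') * (p ^ 2 - 1))"
        using w[OF a] w[OF a'] cnj_zeta_pow[OF p0] by simp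
      also have "\<dots> = zeta p ^ (p ^ 2 * s0 + p * E)"
        unfolding E_def by (simp only: power_add[symmetric] exp_id1[OF p0])
      also have "\<dots> = zeta p ^ (p * E)"
        by (simp add: power_add power_mult zeta_pow_p2[OF p0])
      finally have "\<And>k. (chi p b a * cnj (chi p b a')) ^ k = zeta p ^ (p * E * k)"
        by (simp add: power_mult)
      hence "(\<Sum>k<p. (chi p b a * cnj (chi p b a')) ^ k) = (\<Sum>k<p. zeta p ^ (p * E * k))" by simp
      also have "\<dots> = 0" by (rule GS[OF p ne])
      finally show ?thesis using False by simp
    qed
    show "\<exists>c :: nat \<times> nat \<Rightarrow> complex. \<forall>a\<in>A. f a = (\<Sum>x\<in>B. c x * chi p x a)"
    proof (intro exI ballI)
      fix a assume a: "a \<in> A"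
      have "(\<Sum>x\<in>B. c x * chi p x a) = (\<Sum>k<p. c (kb k) * chi p (kb k) a)"
        unfolding B_def by (rule sum.reindex[OF injk, unfolded comp_def])
      also have "\<dots> = (\<Sum>k<p. (1 / of_nat p) * (\<Sum>a'\<in>A. f a' * (chi p b a * cnj (chi p b a')) ^ k))"
        unfolding c_def ck by (simp add: sum_distrib_left sum_distrib_right power_mult_distrib mult_ac)
      also have "\<dots> = (1 / of_nat p) * (\<Sum>a'\<in>A. f a' * (\<Sum>k<p. (chi p b a * cnj (chi p b a')) ^ k))"
        by (simp add: sum_distrib_left sum.swap[of _ "{..<p}"])
      also have "\<dots> = (1 / of_nat p) * (\<Sum>a'\<in>A. f a' * (if a' = a then of_nat p else 0))"
        using inner[OF a] by simp
      also have "\<dots> = f a"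
        using a fin p0 by (simp add: if_distrib sum.delta' cong: if_cong)
      finally show "f a = (\<Sum>x\<in>B. c x * chi p x a)" by simp
    qed
  qed
  show ?thesis unfolding spectral_def using BG orthB span by blast
qed

lemma addcancel: fixes x x' c m :: nat
  assumes "x < m" "x' < m" "(x + c) mod m = (x' + c) mod m" shows "x = x'"
proof -
  have "int x mod int m = int x' mod int m"
  proof -
    have "(int x + int c) mod int m = (int x' + int c) mod int m"
      using assms(3) by (metis of_nat_add zmod_int)
    hence "((int x + int c) - int c) mod int m = ((int x' + int c) - int c) mod int m"
      by (metis mod_diff_left_eq)
    thus ?thesis by simp
  qed
  thus ?thesis using assms by simp
qed

lemma solve: fixes x y z m :: nat
  assumes "x < m" "y < m" "(x + y) mod m = z" shows "y = (z + m - x) mod m"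
proof (cases "x + y < m")
  case True
  hence "z = x + y" using assms by simp
  hence "z + m - x = y + m" by simp
  thus ?thesis using assms by simp
next
  case False
  have lt: "x + y - m < m" using assms by linarith
  have "z = x + y - m" using assms False lt by (simp add: mod_if)
  hence "z + m - x = y" using False by simp
  thus ?thesis using assms by simp
qed

lemma phi_add: "phi p b (addG p x y) = (phi p b x + phi p b y) mod p ^ 2"
proof -
  define m where "m = p ^ 2"
  have e0: "p * ((snd x + snd y) mod p) = (p * (snd x + snd y)) mod m"
    unfolding m_def power2_eq_square by (rule mult_mod_right)
  have "phi p b (addG p x y) = (((fst x + fst y) mod m) * fst b + snd b * (p * ((snd x + snd y) mod p))) mod m"
    unfolding phi_def addG_def m_def by (simp add: mult_ac)
  also have "\<dots> = (((fst x + fst y) mod m) * fst b + snd b * ((p * (snd x + snd y)) mod m)) mod m"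
    by (simp only: e0)
  also have "\<dots> = ((((fst x + fst y) mod m) * fst b) mod m + (snd b * ((p * (snd x + snd y)) mod m)) mod m) mod m"
    by (simp only: mod_add_eq)
  also have "\<dots> = (((fst x + fst y) * fst b) mod m + (snd b * (p * (snd x + snd y))) mod m) mod m"
    by (simp only: mod_mult_left_eq mod_mult_right_eq)
  also have "\<dots> = ((fst x + fst y) * fst b + snd b * (p * (snd x + snd y))) mod m"
    by (simp only: mod_add_eq)
  also have "(fst x + fst y) * fst b + snd b * (p * (snd x + snd y))
      = (fst x * fst b + p * snd x * snd b) + (fst y * fst b + p * snd y * snd b)"
    by (simp add: algebra_simps)
  also have "((fst x * fst b + p * snd x * snd b) + (fst y * fst b + p * snd y * snd b)) mod m
      = (phi p b x + phi p b y) mod m"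
    unfolding phi_def m_def by (simp only: mod_add_eq)
  finally show ?thesis unfolding m_def .
qed

lemma tile_main:
  assumes p: "prime p" and AG: "A \<subseteq> Gset p" and cA: "card A = p" and s0: "s0 < p"
    and res: "\<forall>a\<in>A. phi p b a mod p = s0" and inj: "inj_on (phi p b) A"
  shows "tile p A"
proof -
  have p0: "p > 0" using p prime_gt_0_nat by blast
  have fin: "finite A" using AG Gset_finite finite_subset by blast
  define \<tau> where "\<tau> a = phi p b a div p" for a
  have phis: "\<And>a. a \<in> A \<Longrightarrow> phi p b a = s0 + p * \<tau> a"
    unfolding \<tau>_def using res by (metis mod_mult_div_eq)
  have \<tau>lt: "\<And>a. \<tau> a < p"
  proof -
    fix a
    have "phi p b a < p * p" using phi_less[OF p0, of b a] by (simp add: power2_eq_square)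
    thus "\<tau> a < p" unfolding \<tau>_def by (simp add: less_mult_imp_div_less)
  qed
  have inj\<tau>: "inj_on \<tau> A"
  proof (rule inj_onI)
    fix a a' assume "a \<in> A" "a' \<in> A" "\<tau> a = \<tau> a'"
    hence "phi p b a = phi p b a'" using phis by metis
    thus "a = a'" using inj_onD[OF inj _ \<open>a \<in> A\<close> \<open>a' \<in> A\<close>] by blast
  qed
  have surj\<tau>: "\<tau> ` A = {..<p}"
  proof -
    have sub: "\<tau> ` A \<subseteq> {..<p}" using \<tau>lt by auto
    have "card (\<tau> ` A) = card {..<p}" using card_image[OF inj\<tau>] cA by simp
    thus ?thesis using sub by (intro card_subset_eq) auto
  qed
  define T where "T = {t \<in> Gset p. phi p b t < p}"
  have TG: "T \<subseteq> Gset p" unfolding T_def by auto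
  have mG: "\<And>x. x \<in> Gset p \<Longrightarrow> fst x < p ^ 2 \<and> snd x < p" unfolding Gset_def by auto
  have cancel: "\<And>a t t'. a \<in> Gset p \<Longrightarrow> t \<in> Gset p \<Longrightarrow> t' \<in> Gset p \<Longrightarrow> addG p a t = addG p a t' \<Longrightarrow> t = t'"
  proof -
    fix a t t' assume a: "a \<in> Gset p" and t: "t \<in> Gset p" and t': "t' \<in> Gset p" and e: "addG p a t = addG p a t'"
    have "(fst t + fst a) mod p ^ 2 = (fst t' + fst a) mod p ^ 2" using e unfolding addG_def by (simp add: add.commute)
    hence 1: "fst t = fst t'" using mG[OF t] mG[OF t'] addcancel by blast
    have "(snd t + snd a) mod p = (snd t' + snd a) mod p" using e unfolding addG_def by (simp add: add.commute)
    hence 2: "snd t = snd t'" using mG[OF t] mG[OF t'] addcancel by blast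
    show "t = t'" using 1 2 by (simp add: prod_eq_iff)
  qed
  show ?thesis unfolding tile_def
  proof (intro exI[of _ T] conjI TG ballI)
    fix g assume g: "g \<in> Gset p"
    define v where "v = phi p b g"
    define w where "w = (v + p ^ 2 - s0) mod p ^ 2"
    have wlt: "w < p ^ 2" unfolding w_def using p0 by simp
    have "w div p < p" using wlt by (simp add: power2_eq_square less_mult_imp_div_less)
    then obtain a where a: "a \<in> A" and ta: "\<tau> a = w div p" using surj\<tau> by (metis imageE lessThan_iff)
    have aG: "a \<in> Gset p" using a AG by auto
    define t where "t = ((fst g + p ^ 2 - fst a) mod p ^ 2, (snd g + p - snd a) mod p)"
    have tG: "t \<in> Gset p" unfolding t_def Gset_def using p0 by auto
    have gat: "addG p a t = g"
    proof -
      have "(fst a + (fst g + p ^ 2 - fst a) mod p ^ 2) mod p ^ 2 = (fst a + (fst g + p ^ 2 - fst a)) mod p ^ 2"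
        by (simp only: mod_add_right_eq)
      also have "fst a + (fst g + p ^ 2 - fst a) = fst g + p ^ 2" using mG[OF aG] by simp
      finally have 1: "(fst a + (fst g + p ^ 2 - fst a) mod p ^ 2) mod p ^ 2 = fst g" using mG[OF g] by simp
      have "(snd a + (snd g + p - snd a) mod p) mod p = (snd a + (snd g + p - snd a)) mod p"
        by (simp only: mod_add_right_eq)
      also have "snd a + (snd g + p - snd a) = snd g + p" using mG[OF aG] by simp
      finally have 2: "(snd a + (snd g + p - snd a) mod p) mod p = snd g" using mG[OF g] by simp
      show ?thesis unfolding addG_def t_def using 1 2 by (simp add: prod_eq_iff)
    qed
    have "(phi p b a + phi p b t) mod p ^ 2 = v" unfolding v_def using gat phi_add by metis
    hence pt: "phi p b t = (v + p ^ 2 - phi p b a) mod p ^ 2"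
      using solve phi_less[OF p0] by blast
    have pa: "phi p b a = s0 + p * (w div p)" using phis[OF a] ta by simp
    have vlt: "v < p ^ 2" unfolding v_def by (rule phi_less[OF p0])
    obtain K where K: "v + p ^ 2 - s0 = w + p ^ 2 * K" unfolding w_def by (metis mod_mult_div_eq add.commute)
    have "p * (w div p) \<le> w" by simp
    have "v + p ^ 2 - phi p b a = w mod p + p ^ 2 * K"
    proof -
      have "v + p ^ 2 - phi p b a = (v + p ^ 2 - s0) - p * (w div p)" using pa s0 by simp
      also have "\<dots> = w - p * (w div p) + p ^ 2 * K" using K \<open>p * (w div p) \<le> w\<close> by simp
      also have "w - p * (w div p) = w mod p" by (simp add: minus_div_mult_eq_mod [symmetric] mult.commute)
      finally show ?thesis .
    qed
    hence "phi p b t = w mod p" using pt p0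
      by (simp add: power2_eq_square) (metis mod_less mod_mult_self2 mod_less_divisor less_le_trans mult_le_mono1 le_square power2_eq_square mod_mod_trivial)
    hence tT: "t \<in> T" unfolding T_def using tG p0 by simp
    show "\<exists>!x. x \<in> A \<times> T \<and> addG p (fst x) (snd x) = g"
    proof (rule ex1I[of _ "(a, t)"])
      show "(a, t) \<in> A \<times> T \<and> addG p (fst (a, t)) (snd (a, t)) = g" using a tT gat by simp
    next
      fix x assume x: "x \<in> A \<times> T \<and> addG p (fst x) (snd x) = g"
      obtain a' t' where x': "x = (a', t')" by (cases x)
      have a': "a' \<in> A" and t'T: "t' \<in> T" and ga': "addG p a' t' = g" using x x' by auto
      have a'G: "a' \<in> Gset p" using a' AG by auto
      have t'G: "t' \<in> Gset p" using t'T TG by auto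
      have ptl: "phi p b t < p" "phi p b t' < p" using tT t'T unfolding T_def by auto
      have e1: "(phi p b a + phi p b t) mod p ^ 2 = (phi p b a' + phi p b t') mod p ^ 2"
        using gat ga' phi_add by metis
      have mm: "\<And>n. n mod p ^ 2 mod p = n mod p" by (simp add: power2_eq_square mod_mod_cancel)
      have "(phi p b a + phi p b t) mod p = (phi p b a' + phi p b t') mod p"
        using e1 mm by metis
      hence "(phi p b a mod p + phi p b t) mod p = (phi p b a' mod p + phi p b t') mod p"
        by (metis mod_add_left_eq)
      hence "(s0 + phi p b t) mod p = (s0 + phi p b t') mod p" using res a a' by simp
      hence "(phi p b t + s0) mod p = (phi p b t' + s0) mod p" by (simp add: add.commute)
      hence ptt: "phi p b t = phi p b t'" using ptl addcancel by blast
      have "(phi p b a + phi p b t) mod p ^ 2 = (phi p b a' + phi p b t) mod p ^ 2" using e1 ptt by simp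
      hence "phi p b a = phi p b a'" using phi_less[OF p0] addcancel by blast
      hence aa: "a' = a" using inj_onD[OF inj _ a a'] by simp
      hence "addG p a t' = addG p a t" using ga' gat by simp
      hence "t' = t" using cancel[OF aG t'G tG] by blast
      thus "x = (a, t)" using x' aa by simp
    qed
  qed
qed

theorem final_main:
  fixes p :: nat and A :: "(nat \<times> nat) set"
  assumes "prime p"
    and "A \<subseteq> Gset p"
    and "card A = p"
    and "zeroset p A \<noteq> {}"
  shows "tile p A \<and> spectral p A"
proof -
  obtain b where "b \<in> zeroset p A" using assms(4) by blast
  hence hz: "hat1 p A b = 0" unfolding zeroset_def by simp
  have fin: "finite A" using assms(2) Gset_finite finite_subset by blast
  obtain s0 where "s0 < p" "\<forall>a\<in>A. phi p b a mod p = s0" "inj_on (phi p b) A"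
    using zstructure[OF assms(1) fin assms(3) hz] by blast
  thus ?thesis using tile_main spectral_main assms by blast
qed


theorem proposition5p3:
  fixes p :: nat and A :: "(nat \<times> nat) set"
  assumes "prime p"
    and "A \<subseteq> Gset p"
    and "card A = p"
    and "zeroset p A \<noteq> {}"
  shows "tile p A \<and> spectral p A"
  using final_main[OF assms] .

end
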